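(* Let $H$ be the Horn matrix. Let $A$ be a real symmetric $5\times 5$ matrix with $\langle A, H\rangle = 0$ and $A \in \partial\mathcal{CP}_5\cap \mathcal{DNN}_5^\circ$. Then $A$ has a factorization $A=BB^{\mathsf T}$ where \[ B = \begin{pmatrix} 1& 0&0& y_4& y_5+1 \\ y_1+1 & 1& 0 &0& y_5\\ y_1 & y_2+1 & 1 & 0& 0\\ 0 & y_2& y_3+1&1& 0\\ 0&0&y_3&y_4+1&1 \end{pmatrix} \operatorname{diag}(z_1,z_2,z_3,z_4,z_5) \] for some positive real numbers $y_1,\dots,y_5,z_1,\dots,z_5$.
   Context: $Sym_5$ is the space of real symmetric $5\times 5$ matrices with inner product $\langle A,B\rangle=\operatorname{trace}(A^{\mathsf T}B)$. $\mathcal{CP}_5$ is the cone of matrices $A=BB^{\mathsf T}$ with $B$ a $5\times k$ matrix with nonnegative entries (some $k$); $\mathcal{DNN}_5$ is the cone of positive semidefinite $5\times 5$ matrices with nonnegative entries. $\partial$ denotes boundary and ${}^\circ$ interior (Euclidean topology in $Sym_5$). The Horn matrix is \[H=\begin{pmatrix} 1 & -1 &1& 1& -1 \\ -1 & 1& -1 &1& 1\\ 1 & -1 & 1 & -1 & 1\\ 1 & 1& -1&1& -1\\ -1&1&1&-1&1\end{pmatrix}.\] *)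

theory Defs
  imports "HOL-Analysis.Analysis"
begin

type_synonym mat5 = "real^5^5"

text \<open>Indices of type 5 are written 1,2,3,4,5 (vector [a1,...,a5] \$ k = ak).\<close>

definition Sym5 :: "mat5 set" where
  "Sym5 = {A. transpose A = A}"

definition frob :: "mat5 \<Rightarrow> mat5 \<Rightarrow> real" where
  "frob A B = trace (transpose A ** B)"

text \<open>Completely positive: A = B B^T with B a nonnegative 5 x k matrix,
  columns of B given by b 0, ..., b (k-1).\<close>
definition CP5 :: "mat5 set" where
  "CP5 = {A. \<exists>(k::nat) (b::nat \<Rightarrow> real^5).
              (\<forall>i<k. \<forall>r. 0 \<le> b i $ r) \<and>
              (\<forall>r s. A $ r $ s = (\<Sum>i<k. b i $ r * b i $ s))}"

definition DNN5 :: "mat5 set" where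
  "DNN5 = {A. transpose A = A \<and> (\<forall>x. 0 \<le> x \<bullet> (A *v x)) \<and> (\<forall>r s. 0 \<le> A $ r $ s)}"

definition SymTop :: "mat5 topology" where
  "SymTop = subtopology euclidean Sym5"

definition Horn :: mat5 where
  "Horn = vector [vector [1, -1, 1, 1, -1],
                  vector [-1, 1, -1, 1, 1],
                  vector [1, -1, 1, -1, 1],
                  vector [1, 1, -1, 1, -1],
                  vector [-1, 1, 1, -1, 1]]"

definition Bmat :: "real \<Rightarrow> real \<Rightarrow> real \<Rightarrow> real \<Rightarrow> real \<Rightarrow> mat5" where
  "Bmat y1 y2 y3 y4 y5 = vector [vector [1, 0, 0, y4, y5 + 1],
                                 vector [y1 + 1, 1, 0, 0, y5],
                                 vector [y1, y2 + 1, 1, 0, 0],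
                                 vector [0, y2, y3 + 1, 1, 0],
                                 vector [0, 0, y3, y4 + 1, 1]]"

definition diag5 :: "real \<Rightarrow> real \<Rightarrow> real \<Rightarrow> real \<Rightarrow> real \<Rightarrow> mat5" where
  "diag5 z1 z2 z3 z4 z5 = vector [vector [z1, 0, 0, 0, 0],
                                  vector [0, z2, 0, 0, 0],
                                  vector [0, 0, z3, 0, 0],
                                  vector [0, 0, 0, z4, 0],
                                  vector [0, 0, 0, 0, z5]]"

end

theory Submission
  imports Defs
begin



lemma v5: "(vector [a,b,c,d,e] :: 'a::zero^5) $ 1 = a"
 "(vector [a,b,c,d,e] :: 'a::zero^5) $ 2 = b"
 "(vector [a,b,c,d,e] :: 'a::zero^5) $ 3 = c"
 "(vector [a,b,c,d,e] :: 'a::zero^5) $ 4 = d"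
 "(vector [a,b,c,d,e] :: 'a::zero^5) $ 5 = e"
  unfolding vector_def by simp_all

lemma UNIV5: "(UNIV :: 5 set) = {1,2,3,4,5}"
proof -
  have "card {1::5,2,3,4,5} = 5" by simp
  moreover have "CARD(5) = 5" by simp
  ultimately show ?thesis
    by (metis card_subset_eq finite_class.finite_UNIV subset_UNIV)
qed

lemma UNIV5j: "(UNIV :: 5 set) = {j,j+1,j+2,j+3,j+4}"
proof -
  have "card {j::5,j+1,j+2,j+3,j+4} = 5" by simp
  moreover have "CARD(5) = 5" by simp
  ultimately show ?thesis
    by (metis card_subset_eq finite_class.finite_UNIV subset_UNIV)
qed

lemma sum5: "(\<Sum>i::5\<in>UNIV. f i) = f 1 + f 2 + f 3 + f 4 + f 5"
  unfolding UNIV5 by (simp add: algebra_simps)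

lemma sum5j: "(\<Sum>i::5\<in>UNIV. f i) = f j + f (j+1) + f (j+2) + f (j+3) + f (j+4)"
  by (subst UNIV5j[of j]) (simp add: algebra_simps)

lemma all5: "(\<forall>i::5. P i) \<longleftrightarrow> P 1 \<and> P 2 \<and> P 3 \<and> P 4 \<and> P 5"
  by (metis UNIV5 UNIV_I insertE empty_iff)

lemma t: "(4::5) + 2 = 1 \<and> (j::5) + 3 + 4 = j + 2 \<and> (5::5) = 0" by simp



definition Qp :: "real \<Rightarrow> real \<Rightarrow> real \<Rightarrow> real \<Rightarrow> real \<Rightarrow> real" where
  "Qp a b c d e = a^2+b^2+c^2+d^2+e^2 + 2*(-a*b + a*c + a*d - a*e - b*c + b*d + b*e - c*d + c*e - d*e)"

definition pat :: "real \<Rightarrow> real \<Rightarrow> real \<Rightarrow> real \<Rightarrow> real \<Rightarrow> bool" where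
  "pat a b c d e \<longleftrightarrow> d = 0 \<and> e = 0 \<and> b = a + c"

lemma Qp_id: "Qp a b c d e = (a - b + c + d - e)^2 + 4*b*d + 4*c*(e - d)"
  unfolding Qp_def by (simp add: power2_eq_square algebra_simps)

lemma Qp_rot: "Qp a b c d e = Qp b c d e a"
  unfolding Qp_def by (simp add: algebra_simps)

lemma Qp_core_nonneg:
  assumes "0 \<le> a" "0 \<le> b" "0 \<le> c" "0 \<le> d" "0 \<le> e" "d \<le> e"
  shows "0 \<le> Qp a b c d e"
  unfolding Qp_id using assms by (simp add: mult_nonneg_nonneg add_nonneg_nonneg)

lemma Qp_core_zero:
  assumes "0 \<le> a" "0 \<le> b" "0 \<le> c" "0 \<le> d" "0 \<le> e" "d \<le> e" "Qp a b c d e = 0"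
  shows "pat a b c d e \<or> pat d e a b c \<or> pat e a b c d"
proof -
  have t1: "0 \<le> 4*b*d" "0 \<le> 4*c*(e-d)" using assms by simp_all
  have "(a - b + c + d - e)^2 + 4*b*d + 4*c*(e - d) = 0" using assms(7) Qp_id by simp
  moreover have t0: "0 \<le> (a - b + c + d - e)^2" by simp
  ultimately have s0: "(a - b + c + d - e)^2 = 0" and h2: "b*d = 0" and h3: "c*(e-d) = 0"
    using t1 by linarith+
  from s0 have h1: "a - b + c + d - e = 0" by simp
  show ?thesis
  proof (cases "c = 0")
    case True
    then show ?thesis using h1 h2 unfolding pat_def by auto
  next
    case False
    then have "e = d" using h3 by simp
    then show ?thesis using h1 h2 False assms unfolding pat_def by auto
  qed
qed



definition U :: "5 \<Rightarrow> real^5" where "U j = axis j 1 + axis (j+1) 1"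
definition Q :: "real^5 \<Rightarrow> real" where "Q x = x \<bullet> (Horn *v x)"

lemma Q_Qp: "Q x = Qp (x$1) (x$2) (x$3) (x$4) (x$5)"
  unfolding Q_def inner_vec_def matrix_vector_mult_def sum5 Horn_def
  by (simp add: v5 Qp_def power2_eq_square algebra_simps)

lemma num5: "(6::5) = 1" "(7::5) = 2" "(8::5) = 3" "(9::5) = 4" "(5::5) = 0" "(10::5) = 0"
  by simp_all

lemma Q_Qpj: "Q x = Qp (x$j) (x$(j+1)) (x$(j+2)) (x$(j+3)) (x$(j+4))"
proof -
  have "\<forall>j. Q x = Qp (x$j) (x$(j+1)) (x$(j+2)) (x$(j+3)) (x$(j+4))"
    unfolding all5 Q_Qp by (simp add: Qp_def num5 algebra_simps)
  then show ?thesis by blast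
qed



lemma exists_j:
  fixes x :: "real^5"
  shows "\<exists>j. x$(j+3) \<le> x$(j+4)"
proof (rule ccontr)
  assume nt: "\<not> (\<exists>j. x$(j+3) \<le> x$(j+4))"
  then have h: "x$(k+1) < x$k" for k
  proof -
    have "\<not> x$((k-3)+3) \<le> x$((k-3)+4)" using nt by blast
    moreover have "(k-3)+3 = k" "(k-3)+4 = k+1" by simp_all
    ultimately show ?thesis by simp
  qed
  have "x$2 < x$1" "x$3 < x$2" "x$4 < x$3" "x$5 < x$4" "x$1 < x$5"
    using h[of 1] h[of 2] h[of 3] h[of 4] h[of 5] by (simp_all add: num5)
  then show False by simp
qed

lemma Q_nonneg:
  assumes "\<forall>i. 0 \<le> x$i"
  shows "0 \<le> Q x"
proof -
  obtain j where "x$(j+3) \<le> x$(j+4)" using exists_j by blast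
  then show ?thesis unfolding Q_Qpj[of x j] using assms Qp_core_nonneg by blast
qed

lemma pat_U:
  assumes "pat (x$j) (x$(j+1)) (x$(j+2)) (x$(j+3)) (x$(j+4))"
  shows "x = x$j *\<^sub>R U j + x$(j+2) *\<^sub>R U (j+1)"
proof -
  have "\<forall>r\<in>{j,j+1,j+2,j+3,j+4}. x$r = (x$j *\<^sub>R U j + x$(j+2) *\<^sub>R U (j+1))$r"
    using assms unfolding pat_def U_def by (simp add: axis_def)
  then show ?thesis unfolding vec_eq_iff UNIV5j[symmetric, of j] by blast
qed

lemma Q_zero:
  assumes "\<forall>i. 0 \<le> x$i" "Q x = 0"
  shows "\<exists>j a c. 0 \<le> a \<and> 0 \<le> c \<and> x = a *\<^sub>R U j + c *\<^sub>R U (j+1)"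
proof -
  obtain j where j: "x$(j+3) \<le> x$(j+4)" using exists_j by blast
  have "pat (x$j) (x$(j+1)) (x$(j+2)) (x$(j+3)) (x$(j+4)) \<or>
        pat (x$(j+3)) (x$(j+4)) (x$j) (x$(j+1)) (x$(j+2)) \<or>
        pat (x$(j+4)) (x$j) (x$(j+1)) (x$(j+2)) (x$(j+3))"
    using Qp_core_zero[OF _ _ _ _ _ j] assms unfolding Q_Qpj[of x j] by blast
  moreover have "x$(j+3+1) = x$(j+4)" "x$(j+3+2) = x$j" "x$(j+3+3) = x$(j+1)" "x$(j+3+4) = x$(j+2)"
     "x$(j+4+1) = x$j" "x$(j+4+2) = x$(j+1)" "x$(j+4+3) = x$(j+2)" "x$(j+4+4) = x$(j+3)"
    by (simp_all add: add.assoc num5)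
  ultimately have "\<exists>m. pat (x$m) (x$(m+1)) (x$(m+2)) (x$(m+3)) (x$(m+4))"
    by metis
  then obtain m where "pat (x$m) (x$(m+1)) (x$(m+2)) (x$(m+3)) (x$(m+4))" by blast
  then show ?thesis using pat_U assms(1) by blast
qed



definition op :: "real^5 \<Rightarrow> real^5 \<Rightarrow> mat5" where "op x y = (\<chi> r s. x$r * y$s)"

lemma op_nth[simp]: "op x y $ r $ s = x$r * y$s" unfolding op_def by simp

lemma CP5_alt: "CP5 = {A. \<exists>(k::nat) b. (\<forall>i<k. \<forall>r. 0 \<le> b i $ r) \<and> A = (\<Sum>i<k. op (b i) (b i))}"
  unfolding CP5_def vec_eq_iff by (simp add: sum_component)

lemma sum_split_nat: "(\<Sum>i<m+n. f i) = (\<Sum>i<m. f i) + (\<Sum>i<n. f (m+i))"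
  for f :: "nat \<Rightarrow> 'a::comm_monoid_add"
  by (induction n) (simp_all add: add.assoc)

lemma CP5_add:
  assumes "A \<in> CP5" "B \<in> CP5" shows "A + B \<in> CP5"
proof -
  obtain k1 :: nat and b1 where 1: "\<forall>i<k1. \<forall>r. 0 \<le> b1 i $ r" "A = (\<Sum>i<k1. op (b1 i) (b1 i))"
    using assms(1) unfolding CP5_alt by blast
  obtain k2 :: nat and b2 where 2: "\<forall>i<k2. \<forall>r. 0 \<le> b2 i $ r" "B = (\<Sum>i<k2. op (b2 i) (b2 i))"
    using assms(2) unfolding CP5_alt by blast
  define b where "b i = (if i < k1 then b1 i else b2 (i - k1))" for i
  have "\<forall>i<k1+k2. \<forall>r. 0 \<le> b i $ r" using 1 2 unfolding b_def by auto
  moreover have "A + B = (\<Sum>i<k1+k2. op (b i) (b i))"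
    unfolding sum_split_nat 1 2 b_def by simp
  ultimately show ?thesis unfolding CP5_alt by blast
qed

lemma CP5_scale:
  assumes "A \<in> CP5" "0 \<le> c" shows "c *\<^sub>R A \<in> CP5"
proof -
  obtain k :: nat and b where 1: "\<forall>i<k. \<forall>r. 0 \<le> b i $ r" "A = (\<Sum>i<k. op (b i) (b i))"
    using assms(1) unfolding CP5_alt by blast
  define b' where "b' i = sqrt c *\<^sub>R b i" for i
  have h: "(sqrt c * x) * (sqrt c * y) = c * (x * y)" for x y
    using assms(2) by (simp add: algebra_simps)
  have "\<forall>i<k. \<forall>r. 0 \<le> b' i $ r" using 1 assms(2) unfolding b'_def by auto
  moreover have "c *\<^sub>R A = (\<Sum>i<k. op (b' i) (b' i))"
    unfolding 1 b'_def vec_eq_iff using assms(2)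
    by (simp add: sum_component sum_distrib_left h)
  ultimately show ?thesis unfolding CP5_alt by blast
qed

lemma CP5_convex: "convex CP5"
  unfolding convex_def using CP5_add CP5_scale by simp

lemma CP5_conic: "conic CP5"
  unfolding conic_def using CP5_scale by simp



definition Kset :: "mat5 set" where
  "Kset = (\<lambda>b. op b b) ` ({b. \<forall>r. 0 \<le> b$r} \<inter> sphere 0 1)"

lemma Kset_compact: "compact Kset"
proof -
  have "closed {b::real^5. \<forall>r. 0 \<le> b$r}"
    by (intro closed_Collect_all closed_Collect_le continuous_intros)
  then have "compact ({b::real^5. \<forall>r. 0 \<le> b$r} \<inter> sphere 0 1)"
    by (simp add: closed_Int_compact)
  moreover have "continuous_on UNIV (\<lambda>b::real^5. op b b)"
    unfolding op_def by (intro continuous_intros)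
  ultimately show ?thesis unfolding Kset_def
    using compact_continuous_image continuous_on_subset by blast
qed

lemma trace_op: "trace (op b b) = (norm b)^2"
  unfolding trace_def power2_norm_eq_inner inner_vec_def by (simp add: power2_eq_square)

lemma Kset_sub: "Kset \<subseteq> {M. trace M = 1}"
  unfolding Kset_def using trace_op by auto

lemma trace_scale: "trace (c *\<^sub>R (M::mat5)) = c * trace M"
  unfolding trace_def by (simp add: sum_distrib_left)

lemma convex_trace1: "convex {M::mat5. trace M = 1}"
  unfolding convex_def by (simp add: trace_add trace_scale)

lemma zero_notin: "0 \<notin> convex hull Kset"
proof -
  have "convex hull Kset \<subseteq> {M. trace M = 1}"
    using Kset_sub convex_trace1 by (simp add: hull_minimal)
  moreover have "trace (0::mat5) = 0" unfolding trace_def by simp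
  ultimately show ?thesis by auto
qed

lemma Kset_CP5: "Kset \<subseteq> CP5"
proof
  fix M assume "M \<in> Kset"
  then obtain b where b: "\<forall>r. 0 \<le> b$r" "M = op b b" unfolding Kset_def by auto
  show "M \<in> CP5" unfolding CP5_alt
    by (rule CollectI, rule exI[of _ 1], rule exI[of _ "\<lambda>_. b"]) (simp add: b)
qed



lemma aux_div: "(n::real) \<noteq> 0 \<Longrightarrow> n * n * ((inverse n * x) * (inverse n * y)) = x * y"
  by (simp add: field_simps)

lemma CP5_hull: "CP5 = conic hull (convex hull Kset)"
proof
  show "conic hull (convex hull Kset) \<subseteq> CP5"
    by (intro hull_minimal CP5_conic CP5_convex Kset_CP5)
next
  show "CP5 \<subseteq> conic hull (convex hull Kset)"
  proof
    fix A assume "A \<in> CP5"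
    then obtain k :: nat and b where 1: "\<forall>i<k. \<forall>r. 0 \<le> b i $ r" "A = (\<Sum>i<k. op (b i) (b i))"
      unfolding CP5_alt by blast
    define e :: "real^5" where "e = axis 1 1"
    define K where "K i = (if b i = 0 then op e e else op (b i /\<^sub>R norm (b i)) (b i /\<^sub>R norm (b i)))" for i
    define w where "w i = (norm (b i))^2" for i
    have "\<forall>r. 0 \<le> e $ r" unfolding e_def by (simp add: axis_def)
    moreover have "norm e = 1" unfolding e_def by simp
    ultimately have ein: "e \<in> {b. \<forall>r. 0 \<le> b$r} \<inter> sphere 0 1" by simp
    have Kin: "K i \<in> Kset" if "i < k" for i
    proof (cases "b i = 0")
      case True
      then show ?thesis unfolding K_def Kset_def using ein by auto
    next
      case False
      let ?c = "b i /\<^sub>R norm (b i)"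
      have "\<forall>r. 0 \<le> ?c $ r" using 1 that by simp
      moreover have "norm ?c = 1" using False by simp
      ultimately have "?c \<in> {b. \<forall>r. 0 \<le> b$r} \<inter> sphere 0 1" by simp
      then have "op ?c ?c \<in> Kset" unfolding Kset_def by (rule imageI)
      then show ?thesis unfolding K_def using False by simp
    qed
    have opK: "op (b i) (b i) = w i *\<^sub>R K i" for i
    proof (cases "b i = 0")
      case True
      show ?thesis unfolding K_def w_def True by (simp add: vec_eq_iff)
    next
      case False
      then have n0: "norm (b i) \<noteq> 0" by simp
      have Ki: "K i = op (b i /\<^sub>R norm (b i)) (b i /\<^sub>R norm (b i))" using False K_def by simp
      have "op (b i) (b i) $ r $ s = (w i *\<^sub>R K i) $ r $ s" for r s
      proof -
        have "(w i *\<^sub>R K i) $ r $ s = norm (b i) * norm (b i) * ((inverse (norm (b i)) * b i $ r) * (inverse (norm (b i)) * b i $ s))"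
          unfolding Ki w_def by (simp add: power2_eq_square)
        also have "\<dots> = b i $ r * b i $ s" using aux_div[OF n0] .
        finally show ?thesis by simp
      qed
      then show ?thesis unfolding vec_eq_iff by simp
    qed
    have A: "A = (\<Sum>i<k. w i *\<^sub>R K i)" unfolding 1 opK ..
    define W where "W = (\<Sum>i<k. w i)"
    have W0: "0 \<le> W" unfolding W_def w_def by (simp add: sum_nonneg)
    show "A \<in> conic hull (convex hull Kset)"
    proof (cases "W = 0")
      case True
      then have "\<forall>i<k. w i = 0" unfolding W_def w_def
        by (simp add: sum_nonneg_eq_0_iff)
      then have "A = 0" unfolding A by simp
      moreover have "Kset \<noteq> {}" unfolding Kset_def
        using ein by auto
      ultimately show ?thesis by simp
    next
      case False
      then have Wp: "0 < W" using W0 by simp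
      have X: "(\<Sum>i<k. (w i / W) *\<^sub>R K i) \<in> convex hull Kset"
      proof (rule convex_sum)
        have "(\<Sum>i\<in>{..<k}. w i / W) = (\<Sum>i\<in>{..<k}. w i) / W" by (rule sum_divide_distrib[symmetric])
        also have "\<dots> = 1" using Wp unfolding W_def by simp
        finally show "(\<Sum>i\<in>{..<k}. w i / W) = 1" .
        show "0 \<le> w i / W" for i using Wp unfolding w_def by simp
        show "K i \<in> convex hull Kset" if "i \<in> {..<k}" for i
        proof -
          have "K i \<in> Kset" using Kin that by simp
          then show ?thesis using hull_subset[of Kset convex] by blast
        qed
        show "finite {..<k}" by simp
        show "convex (convex hull Kset)" by simp
      qed
      have "W *\<^sub>R (\<Sum>i<k. (w i / W) *\<^sub>R K i) = (\<Sum>i<k. w i *\<^sub>R K i)"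
        unfolding scaleR_sum_right scaleR_scaleR using Wp by (intro sum.cong refl) simp
      then have AW: "A = W *\<^sub>R (\<Sum>i<k. (w i / W) *\<^sub>R K i)" using A by simp
      show ?thesis unfolding conic_hull_explicit mem_Collect_eq
        by (rule exI[of _ W], rule exI[of _ "\<Sum>i<k. (w i / W) *\<^sub>R K i"]) (simp add: W0 X AW)
    qed
  qed
qed

lemma CP5_closed: "closed CP5"
  unfolding CP5_hull
  by (rule closed_conic_hull) (simp add: compact_convex_hull Kset_compact zero_notin)



lemma frob_sum: "frob A H = (\<Sum>r\<in>UNIV. \<Sum>s\<in>UNIV. A$r$s * H$r$s)"
proof -
  have "frob A H = (\<Sum>r\<in>UNIV. \<Sum>s\<in>UNIV. A$s$r * H$s$r)"
    unfolding frob_def trace_def matrix_matrix_mult_def transpose_def by simp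
  also have "\<dots> = (\<Sum>s\<in>UNIV. \<Sum>r\<in>UNIV. A$s$r * H$s$r)" by (rule sum.swap)
  finally show ?thesis .
qed

lemma Q_sum: "Q x = (\<Sum>r\<in>UNIV. \<Sum>s\<in>UNIV. (x$r * x$s) * Horn$r$s)"
  unfolding Q_def inner_vec_def matrix_vector_mult_def
  by (simp add: sum_distrib_left mult_ac)

lemma frob_CP:
  assumes "A = (\<Sum>i<k. op (b i) (b i))"
  shows "frob A Horn = (\<Sum>i<k. Q (b i))"
proof -
  have "(\<Sum>i<k. Q (b i)) = (\<Sum>i<k. \<Sum>r\<in>UNIV. \<Sum>s\<in>UNIV. (b i$r * b i$s) * Horn$r$s)"
    unfolding Q_sum ..
  also have "\<dots> = (\<Sum>r\<in>UNIV. \<Sum>i<k. \<Sum>s\<in>UNIV. (b i$r * b i$s) * Horn$r$s)" by (rule sum.swap)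
  also have "\<dots> = (\<Sum>r\<in>UNIV. \<Sum>s\<in>UNIV. \<Sum>i<k. (b i$r * b i$s) * Horn$r$s)"
    by (rule sum.cong[OF refl], rule sum.swap)
  also have "\<dots> = (\<Sum>r\<in>UNIV. \<Sum>s\<in>UNIV. A$r$s * Horn$r$s)"
    unfolding assms by (simp add: sum_component sum_distrib_right)
  finally show ?thesis unfolding frob_sum by simp
qed

lemma op_expand:
  "op (a *\<^sub>R u + c *\<^sub>R w) (a *\<^sub>R u + c *\<^sub>R w) =
     (a*a) *\<^sub>R op u u + (a*c) *\<^sub>R (op u w + op w u) + (c*c) *\<^sub>R op w w"
  unfolding vec_eq_iff by (simp add: algebra_simps)

definition genform :: "(5 \<Rightarrow> real) \<Rightarrow> (5 \<Rightarrow> real) \<Rightarrow> (5 \<Rightarrow> real) \<Rightarrow> mat5" where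
  "genform al be ga = (\<Sum>j\<in>UNIV. al j *\<^sub>R op (U j) (U j) + be j *\<^sub>R (op (U j) (U (j+1)) + op (U (j+1)) (U j))
                          + ga j *\<^sub>R op (U (j+1)) (U (j+1)))"

lemma genform_shift: "genform al be ga = genform (\<lambda>j. al j + ga (j - 1)) be (\<lambda>_. 0)"
proof -
  have "(\<Sum>j\<in>UNIV. ga j *\<^sub>R op (U (j+1)) (U (j+1))) = (\<Sum>j\<in>UNIV. ga (j - 1) *\<^sub>R op (U j) (U j))"
    by (rule sum.reindex_bij_witness[of _ "\<lambda>j. j - 1" "\<lambda>j. j + 1"]) auto
  then show ?thesis unfolding genform_def
    by (simp add: sum.distrib scaleR_add_left algebra_simps)
qed

lemma genform_entry: "genform s be (\<lambda>_. 0) $ j $ (j+2) = be j"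
  unfolding genform_def
  by (simp add: sum_component sum5j[of _ j] U_def axis_def num5 algebra_simps)

lemma CP_horn_decomp:
  assumes "A \<in> CP5" "frob A Horn = 0"
  shows "\<exists>al be ga. (\<forall>j. 0 \<le> al j \<and> 0 \<le> be j \<and> 0 \<le> ga j \<and> (be j)^2 \<le> al j * ga j)
            \<and> A = genform al be ga"
proof -
  obtain k :: nat and b where 1: "\<forall>i<k. \<forall>r. 0 \<le> b i $ r" "A = (\<Sum>i<k. op (b i) (b i))"
    using assms(1) unfolding CP5_alt by blast
  have "(\<Sum>i<k. Q (b i)) = 0" using frob_CP[OF 1(2)] assms(2) by simp
  moreover have "\<forall>i\<in>{..<k}. 0 \<le> Q (b i)" using 1(1) Q_nonneg by simp
  ultimately have Q0: "\<forall>i<k. Q (b i) = 0"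
    using sum_nonneg_eq_0_iff[of "{..<k}" "\<lambda>i. Q (b i)"] by auto
  have "\<exists>p::5 \<times> real \<times> real. i < k \<longrightarrow> 0 \<le> fst (snd p) \<and> 0 \<le> snd (snd p) \<and>
          b i = fst (snd p) *\<^sub>R U (fst p) + snd (snd p) *\<^sub>R U (fst p + 1)" for i
  proof (cases "i < k")
    case True
    then have "\<forall>r. 0 \<le> b i $ r" "Q (b i) = 0" using 1(1) Q0 by auto
    then obtain j a c where "0 \<le> a \<and> 0 \<le> c \<and> b i = a *\<^sub>R U j + c *\<^sub>R U (j+1)"
      using Q_zero by blast
    then show ?thesis by (intro exI[of _ "(j, a, c)"]) simp
  qed simp
  then obtain f where f: "\<And>i. i < k \<Longrightarrow> 0 \<le> fst (snd (f i)) \<and> 0 \<le> snd (snd (f i)) \<and>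
          b i = fst (snd (f i)) *\<^sub>R U (fst (f i)) + snd (snd (f i)) *\<^sub>R U (fst (f i) + 1)"
    by metis
  define J where "J i = fst (f i)" for i
  define a where "a i = fst (snd (f i))" for i
  define c where "c i = snd (snd (f i))" for i
  have Jac: "\<And>i. i < k \<Longrightarrow> 0 \<le> a i \<and> 0 \<le> c i \<and> b i = a i *\<^sub>R U (J i) + c i *\<^sub>R U (J i + 1)"
    unfolding J_def a_def c_def using f by blast
  define S where "S j = {i. i \<in> {..<k} \<and> J i = j}" for j
  define al where "al j = (\<Sum>i\<in>S j. a i * a i)" for j
  define be where "be j = (\<Sum>i\<in>S j. a i * c i)" for j
  define ga where "ga j = (\<Sum>i\<in>S j. c i * c i)" for j
  have "A = (\<Sum>i<k. (a i * a i) *\<^sub>R op (U (J i)) (U (J i)) + (a i * c i) *\<^sub>R (op (U (J i)) (U (J i + 1)) + op (U (J i + 1)) (U (J i)))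
                + (c i * c i) *\<^sub>R op (U (J i + 1)) (U (J i + 1)))"
    unfolding 1(2) by (rule sum.cong[OF refl]) (simp add: Jac op_expand)
  also have "\<dots> = (\<Sum>j\<in>UNIV. \<Sum>i\<in>S j. (a i * a i) *\<^sub>R op (U (J i)) (U (J i)) + (a i * c i) *\<^sub>R (op (U (J i)) (U (J i + 1)) + op (U (J i + 1)) (U (J i)))
                + (c i * c i) *\<^sub>R op (U (J i + 1)) (U (J i + 1)))"
    unfolding S_def by (rule sum.group[symmetric]) auto
  also have "\<dots> = (\<Sum>j\<in>UNIV. \<Sum>i\<in>S j. (a i * a i) *\<^sub>R op (U j) (U j) + (a i * c i) *\<^sub>R (op (U j) (U (j + 1)) + op (U (j + 1)) (U j))
                + (c i * c i) *\<^sub>R op (U (j + 1)) (U (j + 1)))"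
    unfolding S_def by (intro sum.cong refl) auto
  also have "\<dots> = genform al be ga"
    unfolding genform_def al_def be_def ga_def by (simp add: sum.distrib scaleR_sum_left)
  finally have "A = genform al be ga" .
  moreover have "\<forall>j. 0 \<le> al j \<and> 0 \<le> be j \<and> 0 \<le> ga j \<and> (be j)^2 \<le> al j * ga j"
  proof
    fix j
    have "\<forall>i\<in>S j. 0 \<le> a i \<and> 0 \<le> c i" unfolding S_def using Jac by simp
    then show "0 \<le> al j \<and> 0 \<le> be j \<and> 0 \<le> ga j \<and> (be j)^2 \<le> al j * ga j"
      unfolding al_def be_def ga_def
      using Cauchy_Schwarz_ineq_sum[of a c "S j"]
      by (auto simp: sum_nonneg power2_eq_square)
  qed
  ultimately show ?thesis by blast
qed



lemma all5': "(\<forall>i::5. P i) \<longleftrightarrow> P 0 \<and> P 1 \<and> P 2 \<and> P 3 \<and> P 4"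
  using all5[of P] by (simp add: num5, blast)

lemma fixpoint:
  fixes a s be :: "5 \<Rightarrow> real"
  assumes apos: "\<And>j. 0 < a j" and sup: "\<And>j. a (j+1) \<le> s (j+1) - (be j)^2 / a j"
  shows "\<exists>p. \<forall>j. 0 < p j \<and> p (j+1) = s (j+1) - (be j)^2 / p j"
proof -
  define f where "f j x = s (j+1) - (be j)^2 / x" for j x
  have mf: "a (j+1) \<le> f j x" if "a j \<le> x" for j x
  proof -
    have "(be j)^2 / x \<le> (be j)^2 / a j"
      using that apos[of j] by (intro divide_left_mono) auto
    then show ?thesis using sup[of j] unfolding f_def by simp
  qed
  have uf: "f j x \<le> s (j+1)" if "0 < x" for j x
    unfolding f_def using that by simp
  have cf: "continuous_on {a j..} (f j)" for j
    unfolding f_def using apos[of j]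
    by (intro continuous_intros) auto
  have imf: "f j ` {a j..} \<subseteq> {a (j+1)..}" for j using mf by auto
  define F where "F x = f 4 (f 3 (f 2 (f 1 (f 0 x))))" for x
  have cF: "continuous_on {a 0..} F"
  proof -
    have c1: "continuous_on {a 0..} (\<lambda>x. f 1 (f 0 x))"
      by (rule continuous_on_compose2[OF cf cf]) (use imf[of 0] in simp)
    have c2: "continuous_on {a 0..} (\<lambda>x. f 2 (f 1 (f 0 x)))"
      by (rule continuous_on_compose2[OF cf c1]) (use imf[of 0] imf[of 1] in force)
    have c3: "continuous_on {a 0..} (\<lambda>x. f 3 (f 2 (f 1 (f 0 x))))"
      by (rule continuous_on_compose2[OF cf c2]) (use imf[of 0] imf[of 1] imf[of 2] in force)
    have c4: "continuous_on {a 0..} (\<lambda>x. f 4 (f 3 (f 2 (f 1 (f 0 x)))))"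
      by (rule continuous_on_compose2[OF cf c3]) (use imf[of 0] imf[of 1] imf[of 2] imf[of 3] in force)
    then show ?thesis unfolding F_def .
  qed
  have chain: "a 1 \<le> f 0 x \<and> a 2 \<le> f 1 (f 0 x) \<and> a 3 \<le> f 2 (f 1 (f 0 x)) \<and>
      a 4 \<le> f 3 (f 2 (f 1 (f 0 x))) \<and> a 0 \<le> F x" if "a 0 \<le> x" for x
  proof -
    have 1: "a 1 \<le> f 0 x" using mf[of 0 x] that by simp
    have 2: "a 2 \<le> f 1 (f 0 x)" using mf[of 1] 1 by simp
    have 3: "a 3 \<le> f 2 (f 1 (f 0 x))" using mf[of 2] 2 by simp
    have 4: "a 4 \<le> f 3 (f 2 (f 1 (f 0 x)))" using mf[of 3] 3 by simp
    have 5: "a 0 \<le> F x" using mf[of 4] 4 unfolding F_def by (simp add: num5)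
    show ?thesis using 1 2 3 4 5 by simp
  qed
  have Fup: "F x \<le> s 0" if "a 0 \<le> x" for x
  proof -
    have "0 < f 3 (f 2 (f 1 (f 0 x)))" using chain[OF that] apos[of 4] by linarith
    then show ?thesis using uf[of "f 3 (f 2 (f 1 (f 0 x)))" 4] unfolding F_def by (simp add: num5)
  qed
  have a0s: "a 0 \<le> s 0" using chain[of "a 0"] Fup[of "a 0"] by simp
  obtain x where x: "a 0 \<le> x" "x \<le> s 0" "F x - x = 0"
  proof -
    have "continuous_on {a 0..s 0} (\<lambda>x. F x - x)"
      by (intro continuous_intros continuous_on_subset[OF cF]) auto
    then have "\<exists>x. a 0 \<le> x \<and> x \<le> s 0 \<and> F x - x = 0"
      using IVT2'[of "\<lambda>x. F x - x" "s 0" 0 "a 0"] chain[of "a 0"] Fup[of "s 0"] a0s by simp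
    then show ?thesis using that by blast
  qed
  define p where "p j = (if j = 0 then x else if j = 1 then f 0 x else if j = 2 then f 1 (f 0 x)
      else if j = 3 then f 2 (f 1 (f 0 x)) else f 3 (f 2 (f 1 (f 0 x))))" for j :: 5
  have "\<forall>j. 0 < p j"
    unfolding all5' p_def using chain[OF x(1)] apos x(1) by (auto intro: less_le_trans)
  moreover have "\<forall>j::5. p (j+1) = f j (p j)"
    unfolding all5' p_def using x(3) unfolding F_def by (simp add: num5)
  ultimately show ?thesis unfolding f_def by blast
qed



lemma v5': "(vector [a,b,c,d,e] :: 'a::zero^5) $ 0 = e"
  using v5(5)[of a b c d e] by (simp add: num5)

lemma Bmat_col: "Bmat y1 y2 y3 y4 y5 $ r $ m = (U m + (vector [y1,y2,y3,y4,y5] :: real^5) $ m *\<^sub>R U (m+1)) $ r"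
proof -
  have "\<forall>r m. Bmat y1 y2 y3 y4 y5 $ r $ m = (U m + (vector [y1,y2,y3,y4,y5] :: real^5) $ m *\<^sub>R U (m+1)) $ r"
    unfolding all5' Bmat_def U_def by (simp add: v5 v5' axis_def num5)
  then show ?thesis by blast
qed

lemma diag_entry: "diag5 z1 z2 z3 z4 z5 $ n $ m = (if n = m then (vector [z1,z2,z3,z4,z5] :: real^5) $ m else 0)"
proof -
  have "\<forall>n m. diag5 z1 z2 z3 z4 z5 $ n $ m = (if n = m then (vector [z1,z2,z3,z4,z5] :: real^5) $ m else 0)"
    unfolding all5' diag5_def by (simp add: v5 v5' num5)
  then show ?thesis by blast
qed

lemma XXt: "((X::mat5) ** transpose X) $ r $ s = (\<Sum>m\<in>UNIV. X$r$m * X$s$m)"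
  by (simp add: matrix_matrix_mult_def transpose_def)

lemma BBt:
  fixes y1 y2 y3 y4 y5 z1 z2 z3 z4 z5 :: real
  defines "yv \<equiv> (vector [y1,y2,y3,y4,y5] :: real^5)" and "zv \<equiv> (vector [z1,z2,z3,z4,z5] :: real^5)"
  shows "(let B = Bmat y1 y2 y3 y4 y5 ** diag5 z1 z2 z3 z4 z5 in B ** transpose B) =
     genform (\<lambda>j. (zv$j)^2) (\<lambda>j. (zv$j)^2 * yv$j) (\<lambda>j. (zv$j)^2 * (yv$j)^2)"
proof -
  have Bd: "(Bmat y1 y2 y3 y4 y5 ** diag5 z1 z2 z3 z4 z5) $ r $ m = (U m + yv$m *\<^sub>R U (m+1)) $ r * zv$m" for r m
  proof -
    have "(Bmat y1 y2 y3 y4 y5 ** diag5 z1 z2 z3 z4 z5) $ r $ m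
        = (\<Sum>n\<in>UNIV. Bmat y1 y2 y3 y4 y5 $ r $ n * (if n = m then zv $ m else 0))"
      unfolding matrix_matrix_mult_def diag_entry zv_def by simp
    also have "\<dots> = Bmat y1 y2 y3 y4 y5 $ r $ m * zv$m"
      by (simp add: if_distrib[of "\<lambda>t. _ * t"] sum.delta' cong: if_cong)
    finally show ?thesis unfolding Bmat_col yv_def .
  qed
  show ?thesis
    unfolding Let_def vec_eq_iff
  proof (intro allI)
    fix r s
    show "(Bmat y1 y2 y3 y4 y5 ** diag5 z1 z2 z3 z4 z5 ** transpose (Bmat y1 y2 y3 y4 y5 ** diag5 z1 z2 z3 z4 z5)) $ r $ s =
          genform (\<lambda>j. (zv$j)^2) (\<lambda>j. (zv$j)^2 * yv$j) (\<lambda>j. (zv$j)^2 * (yv$j)^2) $ r $ s"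
      unfolding genform_def XXt Bd
      by (simp add: sum_component power2_eq_square algebra_simps)
  qed
qed



lemma interior_pos:
  assumes "A \<in> Sym5" "A \<in> SymTop interior_of DNN5"
  shows "0 < A $ r $ s"
proof -
  obtain T where T: "openin SymTop T" "A \<in> T" "T \<subseteq> DNN5"
    using assms(2) unfolding interior_of_def by blast
  obtain V where V: "open V" "T = Sym5 \<inter> V" using T(1) unfolding SymTop_def openin_open by blast
  obtain e where e: "0 < e" "ball A e \<subseteq> V" using V T(2) open_contains_ball by blast
  define E :: mat5 where "E = (\<chi> i j. if (i = r \<and> j = s) \<or> (i = s \<and> j = r) then 1 else 0)"
  define t where "t = e / (2 * (norm E + 1))"
  have tpos: "0 < t" unfolding t_def using e(1) by (simp add: add_nonneg_pos)
  have "t * norm E < e"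
  proof -
    have "t * norm E \<le> t * (norm E + 1)" using tpos by simp
    also have "\<dots> = e / 2"
    proof -
      have n1: "norm E + 1 \<noteq> 0" by (metis add_nonneg_pos norm_ge_zero zero_less_one less_irrefl)
      show ?thesis unfolding t_def using n1 by (simp add: field_simps)
    qed
    finally show ?thesis using e(1) by simp
  qed
  define M where "M = A - t *\<^sub>R E"
  have "dist A M = t * norm E" unfolding M_def dist_norm using tpos by simp
  then have "M \<in> V" using e(2) \<open>t * norm E < e\<close> by (simp add: subset_eq)
  moreover have "M \<in> Sym5"
  proof -
    have "transpose A = A" using assms(1) unfolding Sym5_def by simp
    then show ?thesis unfolding Sym5_def M_def E_def
      by (auto simp: vec_eq_iff transpose_def)
  qed
  ultimately have "M \<in> DNN5" using T(3) V(2) by blast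
  then have "0 \<le> M $ r $ s" unfolding DNN5_def by blast
  then show ?thesis unfolding M_def E_def using tpos by simp
qed



lemma vec_fun5: "(vector [f 1, f 2, f 3, f 4, f 5] :: real^5) $ j = f j"
proof -
  have "\<forall>j. (vector [f 1, f 2, f 3, f 4, f 5] :: real^5) $ j = f j"
    unfolding all5 by (simp add: v5)
  then show ?thesis by blast
qed

theorem lemma2p4:
  fixes A :: mat5
  assumes "A \<in> Sym5"
    and "frob A Horn = 0"
    and "A \<in> SymTop frontier_of CP5"
    and "A \<in> SymTop interior_of DNN5"
  shows "\<exists>y1 y2 y3 y4 y5 z1 z2 z3 z4 z5 :: real.
           0 < y1 \<and> 0 < y2 \<and> 0 < y3 \<and> 0 < y4 \<and> 0 < y5 \<and>
           0 < z1 \<and> 0 < z2 \<and> 0 < z3 \<and> 0 < z4 \<and> 0 < z5 \<and>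
           (let B = Bmat y1 y2 y3 y4 y5 ** diag5 z1 z2 z3 z4 z5
            in A = B ** transpose B)"
proof -
  have "A \<in> SymTop closure_of CP5" using assms(3) unfolding frontier_of_def by blast
  then have "A \<in> closure (Sym5 \<inter> CP5)"
    unfolding SymTop_def closure_of_subtopology euclidean_closure_of by blast
  then have "A \<in> closure CP5" using closure_mono[of "Sym5 \<inter> CP5" CP5] by blast
  then have ACP: "A \<in> CP5" using CP5_closed closure_closed by blast
  obtain al be ga where abg: "\<forall>j. 0 \<le> al j \<and> 0 \<le> be j \<and> 0 \<le> ga j \<and> (be j)^2 \<le> al j * ga j"
      and Ag: "A = genform al be ga"
    using CP_horn_decomp[OF ACP assms(2)] by blast
  define s where "s j = al j + ga (j - 1)" for j
  have As: "A = genform s be (\<lambda>_. 0)" unfolding Ag s_def by (rule genform_shift)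
  have bepos: "0 < be j" for j
    using interior_pos[OF assms(1) assms(4), of j "j+2"] genform_entry[of s be j] As by simp
  have alpos: "0 < al j" for j
  proof -
    have "0 < (be j)^2" using bepos[of j] by simp
    then have "al j \<noteq> 0" using abg by (metis mult_zero_left not_le)
    moreover have "0 \<le> al j" using abg by blast
    ultimately show ?thesis by simp
  qed
  have sup: "al (j+1) \<le> s (j+1) - (be j)^2 / al j" for j
  proof -
    have "(be j)^2 / al j \<le> ga j" using abg alpos[of j] by (simp add: divide_le_eq mult.commute)
    then show ?thesis unfolding s_def by simp
  qed
  obtain p where p: "\<forall>j. 0 < p j \<and> p (j+1) = s (j+1) - (be j)^2 / p j"
    using fixpoint[of al s be, OF alpos sup] by blast
  define y where "y j = be j / p j" for j
  define z where "z j = sqrt (p j)" for j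
  have ypos: "0 < y j" for j unfolding y_def using p bepos[of j] by simp
  have zpos: "0 < z j" for j unfolding z_def using p by simp
  have yv: "(vector [y 1, y 2, y 3, y 4, y 5] :: real^5) $ j = y j" for j by (rule vec_fun5)
  have zv: "(vector [z 1, z 2, z 3, z 4, z 5] :: real^5) $ j = z j" for j by (rule vec_fun5)
  have "(let B = Bmat (y 1) (y 2) (y 3) (y 4) (y 5) ** diag5 (z 1) (z 2) (z 3) (z 4) (z 5) in B ** transpose B)
       = genform (\<lambda>j. (z j)^2) (\<lambda>j. (z j)^2 * y j) (\<lambda>j. (z j)^2 * (y j)^2)"
    using BBt[of "y 1" "y 2" "y 3" "y 4" "y 5" "z 1" "z 2" "z 3" "z 4" "z 5"] unfolding yv zv .
  also have "\<dots> = genform p be (\<lambda>j. (be j)^2 / p j)"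
  proof -
    have "(\<lambda>j. (z j)^2) = p" using p unfolding z_def by (simp add: less_imp_le)
    moreover have "(\<lambda>j. (z j)^2 * y j) = be" unfolding z_def y_def
    proof (rule ext)
      fix j have "0 < p j" using p by blast
      then show "(sqrt (p j))\<^sup>2 * (be j / p j) = be j" by simp
    qed
    moreover have "(\<lambda>j. (z j)^2 * (y j)^2) = (\<lambda>j. (be j)^2 / p j)" unfolding z_def y_def
    proof (rule ext)
      fix j have "0 < p j" using p by blast
      then show "(sqrt (p j))\<^sup>2 * (be j / p j)\<^sup>2 = (be j)\<^sup>2 / p j"
        by (simp add: power2_eq_square)
    qed
    ultimately show ?thesis by simp
  qed
  also have "\<dots> = genform (\<lambda>j. p j + (be (j-1))^2 / p (j-1)) be (\<lambda>_. 0)"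
    by (rule genform_shift)
  also have "\<dots> = genform s be (\<lambda>_. 0)"
  proof -
    have "p j + (be (j-1))^2 / p (j-1) = s j" for j
      using p[rule_format, of "j-1"] by simp
    then show ?thesis by simp
  qed
  finally have "A = (let B = Bmat (y 1) (y 2) (y 3) (y 4) (y 5) ** diag5 (z 1) (z 2) (z 3) (z 4) (z 5) in B ** transpose B)"
    using As by simp
  then show ?thesis using ypos zpos unfolding Let_def by blast
qed


end
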